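(* Let $d\ge 1$ and $N\in\mathbb{N}$. For every $f\in\mathcal{NN}(N)$, \[ \kappa(f) \le \inf \left\{ \kappa(\theta): f = f_{\theta} \text{ on } \mathbb{B}^d,\ \theta\in \mathbb{R}^{(d+2)N} \right\}\le 3\kappa(f). \]
   Context: $\sigma(t)=\max\{t,0\}$ is the ReLU function, $\mathbb{B}^d=\{x\in\mathbb{R}^d:\|x\|_2\le 1\}$ and $\mathbb{S}^d=\{v\in\mathbb{R}^{d+1}:\|v\|_2=1\}$. For a parameter vector $\theta=(a_1,w_1^\intercal,\dots,a_N,w_N^\intercal)^\intercal\in\mathbb{R}^{(d+2)N}$ with $a_i\in\mathbb{R}$, $w_i\in\mathbb{R}^{d+1}$, define $f_\theta(x)=\sum_{i=1}^N a_i\sigma((x^\intercal,1)w_i)$ for $x\in\mathbb{B}^d$, and $\kappa(\theta)=\sum_{i=1}^N|a_i|\,\|w_i\|_2$. $\mathcal{NN}(N)=\{f_\theta:\theta\in\mathbb{R}^{(d+2)N}\}$ (functions on $\mathbb{B}^d$). For a finite signed Borel measure $\mu$ on $\mathbb{S}^d$ let $f_\mu(x)=\int_{\mathbb{S}^d}\sigma((x^\intercal,1)v)\,d\mu(v)$, $x\in\mathbb{B}^d$, and let $\|\mu\|=|\mu|(\mathbb{S}^d)$ be its total variation. For a function $f$ of the form $f_\mu$ with $\mu$ a finitely supported (discrete) signed measure, define $\kappa(f)=\inf\{\|\mu\|: \mu \text{ finitely supported signed measure on } \mathbb{S}^d,\ f=f_\mu \text{ on }\mathbb{B}^d\}$.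 *)

theory Defs
  imports "HOL-Analysis.Analysis"
begin

text \<open>A weight w in R^(d+1) is
  represented as a pair (v, b) :: (real^'d::finite) \<times> real; the product norm is the
  Euclidean norm of R^(d+1) and (x,1) \<bullet> w = x \<bullet> v + b.\<close>

definition relu :: "real \<Rightarrow> real" where
  "relu t = max t 0"

definition unit_ball :: "(real^'d::finite) set" where
  "unit_ball = cball 0 1"

definition unit_sphere :: "((real^'d::finite) \<times> real) set" where
  "unit_sphere = sphere 0 1"

text \<open>Parameter vector theta = (a_1,w_1,...,a_N,w_N), given as a :: nat => real and
  w :: nat => (real^'d::finite) \<times> real, only indices i < N being relevant.\<close>

definition f_param :: "nat \<Rightarrow> (nat \<Rightarrow> real) \<Rightarrow> (nat \<Rightarrow> (real^'d::finite) \<times> real) \<Rightarrow> (real^'d::finite) \<Rightarrow> real" where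
  "f_param N a w x = (\<Sum>i<N. a i * relu ((x, 1) \<bullet> w i))"

definition kappa_param :: "nat \<Rightarrow> (nat \<Rightarrow> real) \<Rightarrow> (nat \<Rightarrow> (real^'d::finite) \<times> real) \<Rightarrow> real" where
  "kappa_param N a w = (\<Sum>i<N. \<bar>a i\<bar> * norm (w i))"

text \<open>NN(N): functions on the unit ball (values outside the ball are irrelevant).\<close>

definition NN :: "nat \<Rightarrow> ((real^'d::finite) \<Rightarrow> real) set" where
  "NN N = {f. \<exists>a w. \<forall>x\<in>unit_ball. f x = f_param N a w x}"

text \<open>A finitely supported signed measure on S^d: a finite set S of atoms in the sphere
  with weights c; f_mu(x) = sum c(v) relu((x,1).v), total variation = sum |c(v)|.\<close>

definition f_meas :: "((real^'d::finite) \<times> real) set \<Rightarrow> ((real^'d::finite) \<times> real \<Rightarrow> real) \<Rightarrow> (real^'d::finite) \<Rightarrow> real" where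
  "f_meas S c x = (\<Sum>v\<in>S. c v * relu ((x, 1) \<bullet> v))"

definition kappa_fun :: "((real^'d::finite) \<Rightarrow> real) \<Rightarrow> real" where
  "kappa_fun f = Inf {(\<Sum>v\<in>S. \<bar>c v\<bar>) | S c. finite S \<and> S \<subseteq> unit_sphere \<and>
                        (\<forall>x\<in>unit_ball. f x = f_meas S c x)}"

definition kappa_inf_param :: "nat \<Rightarrow> ((real^'d::finite) \<Rightarrow> real) \<Rightarrow> real" where
  "kappa_inf_param N f = Inf {kappa_param N a w | a w. \<forall>x\<in>unit_ball. f x = f_param N a w x}"

end

theory Submission
  imports Defs
begin


lemma relu_scale: "c \<ge> 0 \<Longrightarrow> relu (c * t) = c * relu t"
  by (auto simp: relu_def max_def mult_le_0_iff zero_le_mult_iff)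

lemma relu_neg: "relu t = relu (- t) + t"
  by (auto simp: relu_def max_def)

lemma relu_2nd: "relu (e + s) + relu (e - s) - 2 * relu e = max 0 (\<bar>s\<bar> - \<bar>e\<bar>)"
  by (auto simp: relu_def max_def abs_if)

lemma ex_at_right0: "eventually P (at_right (0::real)) \<Longrightarrow> \<exists>s>0. P s"
proof -
  assume "eventually P (at_right (0::real))"
  then obtain b where "b > 0" "\<forall>y>0. y < b \<longrightarrow> P y" unfolding eventually_at_right_field by auto
  thus ?thesis by (intro exI[of _ "b/2"]) auto
qed

lemma aff_unique:
  fixes r r' :: "(real^'d::finite) \<times> real"
  assumes "\<forall>x\<in>cball 0 1. (x, 1) \<bullet> r = (x, 1) \<bullet> r'"
  shows "r = r'"
proof -
  have b: "snd r = snd r'" using assms[rule_format, of 0] by (cases r, cases r') auto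
  define u where "u = fst r - fst r'"
  have "u = 0"
  proof (rule ccontr)
    assume u0: "u \<noteq> 0"
    let ?x = "u /\<^sub>R norm u"
    have "?x \<in> cball 0 1" using u0 by simp
    hence "(?x, 1) \<bullet> r = (?x, 1) \<bullet> r'" using assms by blast
    hence "?x \<bullet> u = 0" using b unfolding u_def by (cases r, cases r') (auto simp: inner_diff_right)
    thus False using u0 by (simp add: dot_square_norm power2_eq_square)
  qed
  thus ?thesis using b unfolding u_def by (simp add: prod_eq_iff)
qed

lemma generic_point:
  fixes v :: "(real^'d::finite) \<times> real" and W :: "((real^'d) \<times> real) set"
  assumes "finite W" "\<bar>snd v\<bar> < norm (fst v)" "\<forall>w\<in>W. \<forall>t. w \<noteq> t *\<^sub>R v"
  shows "\<exists>p. (p, 1) \<bullet> v = 0 \<and> norm p < 1 \<and> (\<forall>w\<in>W. (p, 1) \<bullet> w \<noteq> 0)"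
  using assms(1,3)
proof (induction W rule: finite_induct)
  case empty
  define p where "p = (- (snd v / (norm (fst v))\<^sup>2)) *\<^sub>R fst v"
  have nz: "norm (fst v) > 0" using assms(2) by linarith
  have "(p, 1) \<bullet> v = 0" unfolding p_def using nz
    by (cases v) (simp add: dot_square_norm)
  moreover have "norm p < 1" unfolding p_def using nz assms(2)
    by (simp add: power2_eq_square divide_less_eq)
  ultimately show ?case by blast
next
  case (insert w0 W)
  from insert obtain p where p: "(p, 1) \<bullet> v = 0" "norm p < 1" "\<forall>w\<in>W. (p, 1) \<bullet> w \<noteq> 0" by auto
  show ?case
  proof (cases "(p, 1) \<bullet> w0 = 0")
    case False thus ?thesis using p by auto
  next
    case True
    define vx where "vx = fst v"
    have nz: "norm vx > 0" using assms(2) unfolding vx_def by linarith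
    define l where "l = (fst w0 \<bullet> vx) / (norm vx)\<^sup>2"
    define q where "q = fst w0 - l *\<^sub>R vx"
    have qv: "q \<bullet> vx = 0" unfolding q_def l_def using nz
      by (simp add: inner_diff_left dot_square_norm)
    have qw: "q \<bullet> fst w0 = q \<bullet> q"
    proof -
      have "fst w0 = q + l *\<^sub>R vx" unfolding q_def by simp
      hence "q \<bullet> fst w0 = q \<bullet> q + l * (q \<bullet> vx)" by (metis inner_add_right inner_scaleR_right)
      thus ?thesis using qv by simp
    qed
    have q0: "q \<noteq> 0"
    proof
      assume "q = 0"
      hence fw: "fst w0 = l *\<^sub>R vx" unfolding q_def by simp
      have e1: "p \<bullet> vx = - snd v" using p(1) unfolding vx_def by (cases v) simp
      have "p \<bullet> fst w0 + snd w0 = 0" using True by (cases w0) simp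
      hence "snd w0 = - (l * (p \<bullet> vx))" using fw by simp
      hence "snd w0 = l * snd v" using e1 by simp
      hence "w0 = l *\<^sub>R v" using fw unfolding vx_def by (simp add: prod_eq_iff)
      thus False using insert.prems by auto
    qed
    have ev1: "eventually (\<lambda>s. norm (p + s *\<^sub>R q) < 1) (at_right 0)"
    proof -
      have "((\<lambda>s. norm (p + s *\<^sub>R q)) \<longlongrightarrow> norm (p + 0 *\<^sub>R q)) (at_right (0::real))"
        by (intro tendsto_intros)
      thus ?thesis using p(2) by (simp add: order_tendstoD(2))
    qed
    have ev2: "eventually (\<lambda>s. \<forall>w\<in>W. (p + s *\<^sub>R q, 1) \<bullet> w \<noteq> 0) (at_right 0)"
    proof (rule eventually_ball_finite[OF insert.hyps(1)], rule ballI)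
      fix w assume "w \<in> W"
      have "((\<lambda>s. (p + s *\<^sub>R q, 1) \<bullet> w) \<longlongrightarrow> (p + 0 *\<^sub>R q, 1) \<bullet> w) (at_right (0::real))"
        by (intro tendsto_intros)
      thus "eventually (\<lambda>s. (p + s *\<^sub>R q, 1) \<bullet> w \<noteq> 0) (at_right 0)"
        using p(3) \<open>w \<in> W\<close> by (auto intro: tendsto_imp_eventually_ne)
    qed
    obtain s where s: "s > 0" "norm (p + s *\<^sub>R q) < 1" "\<forall>w\<in>W. (p + s *\<^sub>R q, 1) \<bullet> w \<noteq> 0"
      using ex_at_right0[OF eventually_conj[OF ev1 ev2]] by blast
    have "(p + s *\<^sub>R q, 1) \<bullet> v = 0" using p(1) qv unfolding vx_def
      by (cases v) (simp add: inner_add_left)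
    moreover have "(p + s *\<^sub>R q, 1) \<bullet> w0 \<noteq> 0"
    proof -
      have "(p + s *\<^sub>R q, 1) \<bullet> w0 = (p, 1) \<bullet> w0 + s * (q \<bullet> fst w0)"
        by (cases w0) (simp add: inner_add_left algebra_simps)
      also have "\<dots> = s * (q \<bullet> q)" using True qw by simp
      finally show ?thesis using s(1) q0 by simp
    qed
    ultimately have "(p + s *\<^sub>R q, 1) \<bullet> v = 0 \<and> norm (p + s *\<^sub>R q) < 1 \<and> (\<forall>w\<in>insert w0 W. (p + s *\<^sub>R q, 1) \<bullet> w \<noteq> 0)"
      using s(2,3) by blast
    thus ?thesis by blast
  qed
qed



lemma uniq_kink:
  fixes w :: "'i \<Rightarrow> (real^'d::finite) \<times> real" and r v :: "(real^'d) \<times> real"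
  assumes fin: "finite I"
    and eq: "\<forall>x\<in>cball 0 1. (\<Sum>i\<in>I. a i * relu ((x, 1) \<bullet> w i)) = (x, 1) \<bullet> r"
    and act: "\<bar>snd v\<bar> < norm (fst v)"
  shows "(\<Sum>i\<in>{i\<in>I. \<exists>t. t \<noteq> 0 \<and> w i = t *\<^sub>R v}. a i * norm (w i)) = 0"
proof -
  define Par where "Par = {i\<in>I. \<exists>t. t \<noteq> 0 \<and> w i = t *\<^sub>R v}"
  define J where "J = {i\<in>I. w i \<noteq> 0 \<and> i \<notin> Par}"
  have finJ: "finite J" using fin unfolding J_def by simp
  have "\<forall>u\<in>w ` J. \<forall>t. u \<noteq> t *\<^sub>R v"
  proof (intro ballI allI)
    fix u t assume "u \<in> w ` J"
    then obtain i where i: "i \<in> J" "u = w i" by auto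
    show "u \<noteq> t *\<^sub>R v"
    proof
      assume h: "u = t *\<^sub>R v"
      show False
      proof (cases "t = 0")
        case True thus False using i h unfolding J_def by auto
      next
        case False thus False using i h unfolding J_def Par_def by auto
      qed
    qed
  qed
  then obtain p where p: "(p, 1) \<bullet> v = 0" "norm p < 1" "\<forall>u\<in>w ` J. (p, 1) \<bullet> u \<noteq> 0"
    using generic_point[OF finite_imageI[OF finJ] act] by blast
  define vx where "vx = fst v"
  have nz: "norm vx > 0" using act unfolding vx_def by linarith
  define e where "e i = (p, 1) \<bullet> w i" for i
  define m where "m i = vx \<bullet> fst (w i)" for i
  have ev1: "eventually (\<lambda>s. norm p + s * norm vx \<le> 1) (at_right (0::real))"
  proof -
    have "((\<lambda>s. norm p + s * norm vx) \<longlongrightarrow> norm p + 0 * norm vx) (at_right (0::real))"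
      by (intro tendsto_intros)
    hence "eventually (\<lambda>s. norm p + s * norm vx < 1) (at_right (0::real))"
      using p(2) by (simp add: order_tendstoD(2))
    thus ?thesis by (auto elim: eventually_mono)
  qed
  have ev2: "eventually (\<lambda>s. \<forall>i\<in>J. s * \<bar>m i\<bar> < \<bar>e i\<bar>) (at_right (0::real))"
  proof (rule eventually_ball_finite[OF finJ], rule ballI)
    fix i assume "i \<in> J"
    hence "\<bar>e i\<bar> > 0" using p(3) unfolding e_def by auto
    moreover have "((\<lambda>s. s * \<bar>m i\<bar>) \<longlongrightarrow> 0 * \<bar>m i\<bar>) (at_right (0::real))"
      by (intro tendsto_intros)
    ultimately show "eventually (\<lambda>s. s * \<bar>m i\<bar> < \<bar>e i\<bar>) (at_right 0)"
      by (simp add: order_tendstoD(2))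
  qed
  obtain s where s: "s > 0" "norm p + s * norm vx \<le> 1" "\<forall>i\<in>J. s * \<bar>m i\<bar> < \<bar>e i\<bar>"
    using ex_at_right0[OF eventually_conj[OF ev1 ev2]] by blast
  have in1: "p + s *\<^sub>R vx \<in> cball 0 1"
  proof -
    have "norm (p + s *\<^sub>R vx) \<le> norm p + s * norm vx"
      using norm_triangle_ineq[of p "s *\<^sub>R vx"] s(1) by simp
    thus ?thesis using s(2) by simp
  qed
  have in2: "p - s *\<^sub>R vx \<in> cball 0 1"
  proof -
    have "norm (p - s *\<^sub>R vx) \<le> norm p + s * norm vx"
      using norm_triangle_ineq4[of p "s *\<^sub>R vx"] s(1) by simp
    thus ?thesis using s(2) by simp
  qed
  have in0: "p \<in> cball 0 1" using p(2) by simp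
  have lin1: "(p + s *\<^sub>R vx, 1) \<bullet> u = (p, 1) \<bullet> u + s * (vx \<bullet> fst u)" for u :: "(real^'d) \<times> real"
  proof (cases u)
    case (Pair a b)
    show ?thesis unfolding Pair inner_Pair fst_conv inner_add_left inner_scaleR_left by simp
  qed
  have lin2: "(p - s *\<^sub>R vx, 1) \<bullet> u = (p, 1) \<bullet> u - s * (vx \<bullet> fst u)" for u :: "(real^'d) \<times> real"
  proof (cases u)
    case (Pair a b)
    show ?thesis unfolding Pair inner_Pair fst_conv inner_diff_left inner_scaleR_left by simp
  qed
  define K where "K = s * (norm vx)\<^sup>2 / norm v"
  have "norm (fst v) \<le> norm v" using norm_fst_le[of "fst v" "snd v"] by simp
  hence nv: "norm v > 0" using nz unfolding vx_def by linarith
  have trm: "a i * (relu ((p + s *\<^sub>R vx, 1) \<bullet> w i) + relu ((p - s *\<^sub>R vx, 1) \<bullet> w i) - 2 * relu ((p, 1) \<bullet> w i))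
      = (if i \<in> Par then a i * norm (w i) * K else 0)" if iI: "i \<in> I" for i
  proof -
    have "relu ((p + s *\<^sub>R vx, 1) \<bullet> w i) + relu ((p - s *\<^sub>R vx, 1) \<bullet> w i) - 2 * relu ((p, 1) \<bullet> w i)
        = max 0 (\<bar>s * m i\<bar> - \<bar>e i\<bar>)"
      unfolding lin1 lin2 e_def m_def by (rule relu_2nd)
    also have "\<dots> = (if i \<in> Par then norm (w i) * K else 0)"
    proof (cases "i \<in> Par")
      case True
      then obtain t where t: "t \<noteq> 0" "w i = t *\<^sub>R v" unfolding Par_def by auto
      have "e i = 0" unfolding e_def t(2) using p(1) by simp
      moreover have "m i = t * (norm vx)\<^sup>2" unfolding m_def t(2) vx_def
        by (simp add: dot_square_norm)
      moreover have "norm (w i) * K = \<bar>t\<bar> * s * (norm vx)\<^sup>2" unfolding t(2) K_def using nv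
        by simp
      ultimately show ?thesis using True s(1) by (simp add: abs_mult)
    next
      case False
      show ?thesis
      proof (cases "w i = 0")
        case True thus ?thesis using False unfolding e_def m_def by simp
      next
        case w0: False
        hence "i \<in> J" using False iI unfolding J_def by auto
        hence "\<bar>s * m i\<bar> < \<bar>e i\<bar>" using s(1,3) by (simp add: abs_mult)
        thus ?thesis using False by simp
      qed
    qed
    finally show ?thesis by simp
  qed
  have "(\<Sum>i\<in>I. a i * (relu ((p + s *\<^sub>R vx, 1) \<bullet> w i) + relu ((p - s *\<^sub>R vx, 1) \<bullet> w i) - 2 * relu ((p, 1) \<bullet> w i)))
      = (\<Sum>i\<in>I. a i * relu ((p + s *\<^sub>R vx, 1) \<bullet> w i)) + (\<Sum>i\<in>I. a i * relu ((p - s *\<^sub>R vx, 1) \<bullet> w i))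
        - 2 * (\<Sum>i\<in>I. a i * relu ((p, 1) \<bullet> w i))"
    by (simp add: algebra_simps sum.distrib sum_subtractf sum_distrib_left)
  also have "\<dots> = (p + s *\<^sub>R vx, 1) \<bullet> r + (p - s *\<^sub>R vx, 1) \<bullet> r - 2 * ((p, 1) \<bullet> r)"
    using eq in0 in1 in2 by simp
  also have "\<dots> = 0" unfolding lin1 lin2 by simp
  finally have "(\<Sum>i\<in>I. (if i \<in> Par then a i * norm (w i) * K else 0)) = 0"
    using trm by (simp cong: sum.cong)
  hence "(\<Sum>i\<in>Par. a i * norm (w i) * K) = 0"
    unfolding Par_def using fin by (simp add: sum.inter_filter)
  hence "(\<Sum>i\<in>Par. a i * norm (w i)) * K = 0" by (simp add: sum_distrib_right)
  moreover have "K \<noteq> 0" unfolding K_def using s(1) nz nv by simp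
  ultimately show ?thesis unfolding Par_def by simp
qed



lemma pos_on_ball:
  fixes x :: "real^'d::finite" and v :: "(real^'d) \<times> real"
  assumes "x \<in> cball 0 1" "snd v \<ge> norm (fst v)"
  shows "(x, 1) \<bullet> v \<ge> 0"
proof -
  have "\<bar>x \<bullet> fst v\<bar> \<le> norm x * norm (fst v)" by (rule Cauchy_Schwarz_ineq2)
  also have "\<dots> \<le> norm (fst v)" using assms(1) by (simp add: mult_left_le_one_le)
  finally show ?thesis using assms(2) by (cases v) auto
qed

lemma neg_on_ball:
  fixes x :: "real^'d::finite" and v :: "(real^'d) \<times> real"
  assumes "x \<in> cball 0 1" "snd v \<le> - norm (fst v)"
  shows "(x, 1) \<bullet> v \<le> 0"
proof -
  have "\<bar>x \<bullet> fst v\<bar> \<le> norm x * norm (fst v)" by (rule Cauchy_Schwarz_ineq2)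
  also have "\<dots> \<le> norm (fst v)" using assms(1) by (simp add: mult_left_le_one_le)
  finally show ?thesis using assms(2) by (cases v) auto
qed

lemma sum_if_subset:
  assumes "finite Q" "S \<subseteq> Q"
  shows "(\<Sum>v\<in>Q. if v \<in> S then g v else 0) = sum g S"
proof -
  have "Q \<inter> S = S" using assms by auto
  thus ?thesis using sum.inter_restrict[OF assms(1), of g S] by simp
qed

lemma key_bound:
  fixes S P :: "((real^'d::finite) \<times> real) set" and c \<beta> :: "(real^'d) \<times> real \<Rightarrow> real"
    and r :: "(real^'d) \<times> real"
  assumes finS: "finite S" and Ssph: "S \<subseteq> sphere 0 1" and finP: "finite P"
    and Pu: "\<forall>p\<in>P. norm p = 1 \<and> \<bar>snd p\<bar> < norm (fst p)" and Pa: "\<forall>p\<in>P. - p \<notin> P"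
    and eq: "\<forall>x\<in>cball 0 1. (\<Sum>v\<in>S. c v * relu ((x, 1) \<bullet> v))
               = (\<Sum>p\<in>P. \<beta> p * relu ((x, 1) \<bullet> p)) + (x, 1) \<bullet> r"
  shows "(\<Sum>p\<in>P. \<bar>\<beta> p\<bar>) + 2 * norm r \<le> 3 * (\<Sum>v\<in>S. \<bar>c v\<bar>)"
proof -
  define ct where "ct v = (if v \<in> S then c v else 0)" for v
  define bt where "bt v = (if v \<in> P then \<beta> v else 0)" for v
  define C where "C v = ct v - bt v" for v
  define Q where "Q = S \<union> P \<union> uminus ` S \<union> uminus ` P"
  define act where "act v = (\<bar>snd v\<bar> < norm (fst v))" for v :: "(real^'d) \<times> real"
  define pos where "pos v = (snd v \<ge> norm (fst v))" for v :: "(real^'d) \<times> real"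
  have finQ: "finite Q" unfolding Q_def using finS finP by simp
  have SQ: "S \<subseteq> Q" and PQ: "P \<subseteq> Q" unfolding Q_def by auto
  have Qneg: "- v \<in> Q" if "v \<in> Q" for v
    using that unfolding Q_def by (auto simp: image_iff)
  have SPu: "norm u = 1" if "u \<in> S \<union> P" for u using that Ssph Pu by auto
  have Qunit: "norm v = 1" if "v \<in> Q" for v
  proof -
    from that obtain u where "u \<in> S \<union> P" "v = u \<or> v = - u" unfolding Q_def by blast
    thus ?thesis using SPu by (metis norm_minus_cancel)
  qed
  have actneg: "act (- v) = act v" for v unfolding act_def by simp
  have Cout: "C v = 0" if "v \<notin> Q" for v
    using that SQ PQ unfolding C_def ct_def bt_def by auto
  have F1: "(\<Sum>v\<in>Q. C v * relu ((x, 1) \<bullet> v)) = (x, 1) \<bullet> r" if x: "x \<in> cball 0 1" for x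
  proof -
    have "(\<Sum>v\<in>Q. C v * relu ((x, 1) \<bullet> v))
        = (\<Sum>v\<in>Q. (if v \<in> S then c v * relu ((x, 1) \<bullet> v) else 0)
          - (if v \<in> P then \<beta> v * relu ((x, 1) \<bullet> v) else 0))"
      by (rule sum.cong) (auto simp: C_def ct_def bt_def left_diff_distrib)
    also have "\<dots> = (\<Sum>v\<in>Q. (if v \<in> S then c v * relu ((x, 1) \<bullet> v) else 0))
          - (\<Sum>v\<in>Q. (if v \<in> P then \<beta> v * relu ((x, 1) \<bullet> v) else 0))"
      by (rule sum_subtractf)
    also have "\<dots> = (\<Sum>v\<in>S. c v * relu ((x, 1) \<bullet> v)) - (\<Sum>v\<in>P. \<beta> v * relu ((x, 1) \<bullet> v))"
      using finQ SQ PQ by (simp add: sum_if_subset)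
    also have "\<dots> = (x, 1) \<bullet> r" using eq x by simp
    finally show ?thesis .
  qed
  have F2: "C v + C (- v) = 0" if v: "norm v = 1" "act v" for v
  proof -
    have "(\<Sum>i\<in>{i\<in>Q. \<exists>t. t \<noteq> 0 \<and> id i = t *\<^sub>R v}. C i * norm (id i)) = 0"
      using uniq_kink[OF finQ, of C id r v] F1 v(2) unfolding act_def by simp
    moreover have "{i\<in>Q. \<exists>t. t \<noteq> 0 \<and> id i = t *\<^sub>R v} = Q \<inter> {v, - v}"
    proof (intro equalityI subsetI)
      fix i assume "i \<in> {i\<in>Q. \<exists>t. t \<noteq> 0 \<and> id i = t *\<^sub>R v}"
      then obtain t where t: "i \<in> Q" "i = t *\<^sub>R v" by auto
      hence "\<bar>t\<bar> = 1" using Qunit[OF t(1)] v(1) by simp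
      hence "t = 1 \<or> t = -1" by linarith
      thus "i \<in> Q \<inter> {v, - v}" using t by auto
    next
      fix i assume "i \<in> Q \<inter> {v, - v}"
      thus "i \<in> {i\<in>Q. \<exists>t. t \<noteq> 0 \<and> id i = t *\<^sub>R v}"
        by (auto intro: exI[of _ 1] exI[of _ "-1"])
    qed
    ultimately have s1: "(\<Sum>i\<in>Q \<inter> {v, - v}. C i * norm i) = 0" by simp
    have "(\<Sum>i\<in>Q \<inter> {v, - v}. C i * norm i) = (\<Sum>i\<in>Q \<inter> {v, - v}. C i)"
      by (rule sum.cong) (auto simp: Qunit)
    with s1 have s0: "(\<Sum>i\<in>Q \<inter> {v, - v}. C i) = 0" by simp
    have vv: "v \<noteq> - v"
    proof
      assume h: "v = - v"
      have "v + v = 0" using h by (metis add.right_inverse)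
      hence "(2::real) *\<^sub>R v = 0" by (simp add: scaleR_2)
      hence "v = 0" by simp
      thus False using v(1) by simp
    qed
    show ?thesis
    proof (cases "v \<in> Q")
      case True
      hence "Q \<inter> {v, - v} = {v, - v}" using Qneg by auto
      thus ?thesis using s0 vv by simp
    next
      case False
      hence "- v \<notin> Q" using Qneg[of "- v"] by auto
      thus ?thesis using False Cout by simp
    qed
  qed
  define Qa where "Qa = {v\<in>Q. act v}"
  define Qp where "Qp = {v\<in>Q. pos v}"
  define R where "R = (\<Sum>v\<in>Qa. (C v / 2) *\<^sub>R v) + (\<Sum>v\<in>Qp. C v *\<^sub>R v)"
  have finQa: "finite Qa" and finQp: "finite Qp" unfolding Qa_def Qp_def using finQ by auto
  have Qa_neg: "uminus ` Qa = Qa"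
  proof (intro equalityI subsetI)
    fix v assume "v \<in> uminus ` Qa" thus "v \<in> Qa" unfolding Qa_def using Qneg actneg by auto
  next
    fix v assume "v \<in> Qa"
    hence "- v \<in> Qa" unfolding Qa_def using Qneg actneg by auto
    thus "v \<in> uminus ` Qa" by (metis image_eqI minus_minus)
  qed
  have rR: "r = R"
  proof (rule aff_unique, rule ballI)
    fix x :: "real^'d" assume x: "x \<in> cball 0 1"
    let ?z = "\<lambda>v. (x, 1) \<bullet> v"
    have pw: "C v * relu (?z v) = (if act v then C v / 2 * \<bar>?z v\<bar> + C v / 2 * ?z v else 0)
               + (if pos v then C v * ?z v else 0)" if "v \<in> Q" for v
    proof (cases "act v")
      case True
      hence "\<not> pos v" unfolding act_def pos_def by auto
      moreover have "relu (?z v) = (\<bar>?z v\<bar> + ?z v) / 2" unfolding relu_def by (auto simp: max_def)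
      ultimately show ?thesis using True by (simp add: field_simps)
    next
      case False
      show ?thesis
      proof (cases "pos v")
        case True
        hence "?z v \<ge> 0" using pos_on_ball[OF x] unfolding pos_def by blast
        thus ?thesis using True False by (simp add: relu_def)
      next
        case False2: False
        hence "snd v \<le> - norm (fst v)" using False unfolding act_def pos_def by auto
        hence "?z v \<le> 0" using neg_on_ball[OF x] by blast
        thus ?thesis using False False2 by (simp add: relu_def)
      qed
    qed
    have zero: "(\<Sum>v\<in>Qa. C v * \<bar>?z v\<bar>) = 0"
    proof -
      have inj: "inj_on uminus Qa" by (simp add: inj_on_def)
      have "(\<Sum>v\<in>Qa. C v * \<bar>?z v\<bar>) = (\<Sum>v\<in>uminus ` Qa. C v * \<bar>?z v\<bar>)" using Qa_neg by simp
      also have "\<dots> = (\<Sum>v\<in>Qa. C (- v) * \<bar>?z (- v)\<bar>)"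
        using sum.reindex[OF inj, of "\<lambda>v. C v * \<bar>?z v\<bar>"] by (simp add: o_def)
      also have "\<dots> = (\<Sum>v\<in>Qa. - (C v * \<bar>?z v\<bar>))"
      proof (rule sum.cong[OF refl])
        fix v assume "v \<in> Qa"
        hence "C v + C (- v) = 0" using F2 Qunit unfolding Qa_def by auto
        hence "C (- v) = - C v" by linarith
        thus "C (- v) * \<bar>?z (- v)\<bar> = - (C v * \<bar>?z v\<bar>)" by (simp add: inner_minus_right)
      qed
      finally show ?thesis by (simp add: sum_negf)
    qed
    have "(x, 1) \<bullet> r = (\<Sum>v\<in>Q. C v * relu (?z v))" using F1 x by simp
    also have "\<dots> = (\<Sum>v\<in>Q. (if act v then C v / 2 * \<bar>?z v\<bar> + C v / 2 * ?z v else 0))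
               + (\<Sum>v\<in>Q. (if pos v then C v * ?z v else 0))"
      using pw by (simp add: sum.distrib[symmetric] cong: sum.cong)
    also have "\<dots> = (\<Sum>v\<in>Qa. C v / 2 * \<bar>?z v\<bar> + C v / 2 * ?z v) + (\<Sum>v\<in>Qp. C v * ?z v)"
      unfolding Qa_def Qp_def using finQ by (simp only: sum.inter_filter)
    also have "\<dots> = (\<Sum>v\<in>Qa. C v * \<bar>?z v\<bar>) / 2 + (\<Sum>v\<in>Qa. C v / 2 * ?z v) + (\<Sum>v\<in>Qp. C v * ?z v)"
      by (simp add: sum.distrib sum_divide_distrib)
    also have "\<dots> = (x, 1) \<bullet> R" unfolding R_def zero
      by (simp add: inner_add_right inner_sum_right)
    finally show "(x, 1) \<bullet> r = (x, 1) \<bullet> R" .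
  qed
  have betaP: "\<beta> p = ct p + ct (- p)" if "p \<in> P" for p
  proof -
    have "C p + C (- p) = 0" using F2 Pu that unfolding act_def by auto
    moreover have "bt (- p) = 0" using Pa that unfolding bt_def by auto
    ultimately show ?thesis using that unfolding C_def bt_def by simp
  qed
  have normR: "norm r \<le> (\<Sum>v\<in>Qa. \<bar>C v\<bar>) / 2 + (\<Sum>v\<in>Qp. \<bar>C v\<bar>)"
  proof -
    have "norm r \<le> norm (\<Sum>v\<in>Qa. (C v / 2) *\<^sub>R v) + norm (\<Sum>v\<in>Qp. C v *\<^sub>R v)"
      unfolding rR R_def by (rule norm_triangle_ineq)
    also have "\<dots> \<le> (\<Sum>v\<in>Qa. norm ((C v / 2) *\<^sub>R v)) + (\<Sum>v\<in>Qp. norm (C v *\<^sub>R v))"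
      by (intro add_mono norm_sum)
    also have "\<dots> = (\<Sum>v\<in>Qa. \<bar>C v\<bar> / 2) + (\<Sum>v\<in>Qp. \<bar>C v\<bar>)"
    proof (rule arg_cong2[where f="(+)"])
      show "(\<Sum>v\<in>Qa. norm ((C v / 2) *\<^sub>R v)) = (\<Sum>v\<in>Qa. \<bar>C v\<bar> / 2)"
        by (rule sum.cong) (auto simp: Qa_def Qunit)
      show "(\<Sum>v\<in>Qp. norm (C v *\<^sub>R v)) = (\<Sum>v\<in>Qp. \<bar>C v\<bar>)"
        by (rule sum.cong) (auto simp: Qp_def Qunit)
    qed
    finally show ?thesis by (simp add: sum_divide_distrib)
  qed
  define A1 where "A1 = (\<Sum>v\<in>Q. if v \<in> P then \<bar>ct v\<bar> else 0)"
  define A2 where "A2 = (\<Sum>v\<in>Q. if - v \<in> P then \<bar>ct v\<bar> else 0)"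
  define A3 where "A3 = (\<Sum>v\<in>Q. if act v \<and> v \<notin> P then \<bar>ct v\<bar> else 0)"
  define A4 where "A4 = (\<Sum>v\<in>Q. if pos v then \<bar>ct v\<bar> else 0)"
  have negP: "(\<Sum>p\<in>P. \<bar>ct (- p)\<bar>) = A2"
  proof -
    have inj: "inj_on uminus P" by (simp add: inj_on_def)
    have "(\<Sum>p\<in>P. \<bar>ct (- p)\<bar>) = (\<Sum>v\<in>uminus ` P. \<bar>ct v\<bar>)"
      using sum.reindex[OF inj, of "\<lambda>v. \<bar>ct v\<bar>"] by simp
    also have "\<dots> = (\<Sum>v\<in>Q. if v \<in> uminus ` P then \<bar>ct v\<bar> else 0)"
      using finQ by (intro sum_if_subset[symmetric]) (auto simp: Q_def)
    also have "\<dots> = A2" unfolding A2_def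
    proof (rule sum.cong[OF refl])
      fix v assume "v \<in> Q"
      have "v \<in> uminus ` P \<longleftrightarrow> - v \<in> P"
        by (metis image_eqI minus_minus imageE)
      thus "(if v \<in> uminus ` P then \<bar>ct v\<bar> else 0) = (if - v \<in> P then \<bar>ct v\<bar> else 0)" by simp
    qed
    finally show ?thesis .
  qed
  have posP: "(\<Sum>p\<in>P. \<bar>ct p\<bar>) = A1"
    unfolding A1_def using finQ PQ by (simp add: sum_if_subset)
  have b1: "(\<Sum>p\<in>P. \<bar>\<beta> p\<bar>) \<le> A1 + A2"
  proof -
    have "(\<Sum>p\<in>P. \<bar>\<beta> p\<bar>) \<le> (\<Sum>p\<in>P. \<bar>ct p\<bar> + \<bar>ct (- p)\<bar>)"
      by (rule sum_mono) (simp add: betaP abs_triangle_ineq)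
    thus ?thesis using negP posP by (simp add: sum.distrib)
  qed
  have b2: "(\<Sum>v\<in>Qa. \<bar>C v\<bar>) = A2 + A3"
  proof -
    have "(\<Sum>v\<in>Qa. \<bar>C v\<bar>) = (\<Sum>v\<in>Q. if act v then \<bar>C v\<bar> else 0)"
      unfolding Qa_def using finQ by (simp add: sum.inter_filter)
    also have "\<dots> = (\<Sum>v\<in>Q. (if v \<in> P then \<bar>ct (- v)\<bar> else 0) + (if act v \<and> v \<notin> P then \<bar>ct v\<bar> else 0))"
    proof (rule sum.cong[OF refl])
      fix v assume "v \<in> Q"
      show "(if act v then \<bar>C v\<bar> else 0) = (if v \<in> P then \<bar>ct (- v)\<bar> else 0) + (if act v \<and> v \<notin> P then \<bar>ct v\<bar> else 0)"
      proof (cases "v \<in> P")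
        case True
        hence "act v" using Pu unfolding act_def by auto
        moreover have "C v = - ct (- v)" using betaP[OF True] True unfolding C_def bt_def by simp
        ultimately show ?thesis using True by simp
      next
        case False thus ?thesis unfolding C_def bt_def by simp
      qed
    qed
    also have "\<dots> = (\<Sum>v\<in>Q. if v \<in> P then \<bar>ct (- v)\<bar> else 0) + A3"
      unfolding A3_def by (simp add: sum.distrib)
    also have "(\<Sum>v\<in>Q. if v \<in> P then \<bar>ct (- v)\<bar> else 0) = (\<Sum>p\<in>P. \<bar>ct (- p)\<bar>)"
      using finQ PQ by (simp add: sum_if_subset)
    finally show ?thesis using negP by simp
  qed
  have b3: "(\<Sum>v\<in>Qp. \<bar>C v\<bar>) = A4"
  proof -
    have "(\<Sum>v\<in>Qp. \<bar>C v\<bar>) = (\<Sum>v\<in>Q. if pos v then \<bar>C v\<bar> else 0)"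
      unfolding Qp_def using finQ by (simp add: sum.inter_filter)
    also have "\<dots> = A4" unfolding A4_def
    proof (rule sum.cong[OF refl])
      fix v assume "v \<in> Q"
      have "pos v \<Longrightarrow> v \<notin> P" using Pu unfolding pos_def by force
      thus "(if pos v then \<bar>C v\<bar> else 0) = (if pos v then \<bar>ct v\<bar> else 0)"
        unfolding C_def bt_def by auto
    qed
    finally show ?thesis .
  qed
  have tot: "A1 + 2 * A2 + A3 + 2 * A4 \<le> 3 * (\<Sum>v\<in>Q. \<bar>ct v\<bar>)"
  proof -
    have "A1 + 2 * A2 + A3 + 2 * A4 = (\<Sum>v\<in>Q. (if v \<in> P then \<bar>ct v\<bar> else 0) + 2 * (if - v \<in> P then \<bar>ct v\<bar> else 0)
        + (if act v \<and> v \<notin> P then \<bar>ct v\<bar> else 0) + 2 * (if pos v then \<bar>ct v\<bar> else 0))"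
      unfolding A1_def A2_def A3_def A4_def by (simp add: sum.distrib sum_distrib_left)
    also have "\<dots> \<le> (\<Sum>v\<in>Q. 3 * \<bar>ct v\<bar>)"
    proof (rule sum_mono)
      fix v assume "v \<in> Q"
      have ap: "act v \<Longrightarrow> \<not> pos v" unfolding act_def pos_def by auto
      have c1: "v \<in> P \<Longrightarrow> act v \<and> - v \<notin> P" using Pu Pa unfolding act_def by auto
      have c2: "- v \<in> P \<Longrightarrow> act v \<and> v \<notin> P" using Pu Pa unfolding act_def by force
      show "(if v \<in> P then \<bar>ct v\<bar> else 0) + 2 * (if - v \<in> P then \<bar>ct v\<bar> else 0)
        + (if act v \<and> v \<notin> P then \<bar>ct v\<bar> else 0) + 2 * (if pos v then \<bar>ct v\<bar> else 0) \<le> 3 * \<bar>ct v\<bar>"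
        using ap c1 c2 by (cases "v \<in> P"; cases "- v \<in> P"; cases "act v"; cases "pos v") auto
    qed
    finally show ?thesis by (simp add: sum_distrib_left)
  qed
  have "(\<Sum>v\<in>Q. \<bar>ct v\<bar>) = (\<Sum>v\<in>S. \<bar>c v\<bar>)"
  proof -
    have "(\<Sum>v\<in>Q. \<bar>ct v\<bar>) = (\<Sum>v\<in>Q. if v \<in> S then \<bar>c v\<bar> else 0)"
      unfolding ct_def by (rule sum.cong) auto
    also have "\<dots> = (\<Sum>v\<in>S. \<bar>c v\<bar>)" using finQ SQ by (simp add: sum_if_subset)
    finally show ?thesis .
  qed
  thus ?thesis using b1 b2 b3 normR tot by linarith
qed



definition OneN :: "((real^'d::finite) \<times> real) set \<Rightarrow> ((real^'d) \<times> real) set" where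
  "OneN P = {l *\<^sub>R u | l u. snd u \<ge> norm (fst u) \<or> u \<in> P}"

definition canon :: "nat \<Rightarrow> ((real^'d::finite) \<Rightarrow> real) \<Rightarrow> ((real^'d) \<times> real) set
    \<Rightarrow> ((real^'d) \<times> real \<Rightarrow> real) \<Rightarrow> (real^'d) \<times> real \<Rightarrow> bool" where
  "canon N g P \<beta> r \<longleftrightarrow> finite P \<and> (\<forall>p\<in>P. norm p = 1 \<and> \<bar>snd p\<bar> < norm (fst p)) \<and> (\<forall>p\<in>P. - p \<notin> P)
     \<and> (\<forall>x\<in>cball 0 1. g x = (\<Sum>p\<in>P. \<beta> p * relu ((x, 1) \<bullet> p)) + (x, 1) \<bullet> r)
     \<and> card P \<le> N \<and> (card P = N \<longrightarrow> r = 0) \<and> (N = Suc (card P) \<longrightarrow> r \<in> OneN P)"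

lemma OneN_zero: "0 \<in> OneN P"
  unfolding OneN_def by (rule CollectI, rule exI[of _ 0], rule exI[of _ 0]) simp

lemma f_param_Suc: "f_param (Suc N) a w x = f_param N a w x + a N * relu ((x, 1) \<bullet> w N)"
  by (simp add: f_param_def)

lemma sum_bump:
  assumes "finite P" "q \<in> P"
  shows "(\<Sum>p\<in>P. (\<beta> p + (if p = q then \<gamma> else 0)) * h p) = (\<Sum>p\<in>P. \<beta> p * h p) + (\<gamma>::real) * h q"
proof -
  have "(\<Sum>p\<in>P. (\<beta> p + (if p = q then \<gamma> else 0)) * h p) = (\<Sum>p\<in>P. \<beta> p * h p + (if p = q then \<gamma> * h p else 0))"
    by (rule sum.cong) (auto simp: distrib_right)
  also have "\<dots> = (\<Sum>p\<in>P. \<beta> p * h p) + (\<Sum>p\<in>P. (if p = q then \<gamma> * h p else 0))"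
    by (rule sum.distrib)
  also have "(\<Sum>p\<in>P. (if p = q then \<gamma> * h p else 0)) = \<gamma> * h q"
    using assms by (simp add: sum.delta')
  finally show ?thesis .
qed

lemma inv_exists:
  fixes a :: "nat \<Rightarrow> real" and w :: "nat \<Rightarrow> (real^'d::finite) \<times> real"
  shows "\<exists>P \<beta> r. canon N (f_param N a w) P \<beta> r"
proof (induction N)
  case 0
  have "canon 0 (f_param 0 a w) {} (\<lambda>_. 0) 0"
    unfolding canon_def by (simp add: f_param_def)
  thus ?case by blast
next
  case (Suc N)
  then obtain P \<beta> r where c: "canon N (f_param N a w) P \<beta> r" by blast
  have finP: "finite P" and Pu: "\<forall>p\<in>P. norm p = 1 \<and> \<bar>snd p\<bar> < norm (fst p)"
    and Pa: "\<forall>p\<in>P. - p \<notin> P"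
    and rep: "\<forall>x\<in>cball 0 1. f_param N a w x = (\<Sum>p\<in>P. \<beta> p * relu ((x, 1) \<bullet> p)) + (x, 1) \<bullet> r"
    and cP: "card P \<le> N" and c0: "card P = N \<longrightarrow> r = 0" and c1: "N = Suc (card P) \<longrightarrow> r \<in> OneN P"
    using c unfolding canon_def by auto
  define \<alpha> where "\<alpha> = a N"
  define w0 where "w0 = w N"
  have fS: "f_param (Suc N) a w x = f_param N a w x + \<alpha> * relu ((x, 1) \<bullet> w0)" for x
    unfolding \<alpha>_def w0_def by (rule f_param_Suc)
  show ?case
  proof (cases "\<alpha> = 0 \<or> snd w0 \<le> - norm (fst w0)")
    case True
    have "\<alpha> * relu ((x, 1) \<bullet> w0) = 0" if "x \<in> cball 0 1" for x
      using True neg_on_ball[OF that, of w0] by (auto simp: relu_def)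
    hence "canon (Suc N) (f_param (Suc N) a w) P \<beta> r"
      unfolding canon_def using finP Pu Pa rep cP c0 by (auto simp: fS OneN_zero)
    thus ?thesis by blast
  next
    case nA: False
    show ?thesis
    proof (cases "snd w0 \<ge> norm (fst w0)")
      case True
      have t: "\<alpha> * relu ((x, 1) \<bullet> w0) = (x, 1) \<bullet> (\<alpha> *\<^sub>R w0)" if "x \<in> cball 0 1" for x
        using pos_on_ball[OF that True] by (simp add: relu_def)
      have "r + \<alpha> *\<^sub>R w0 \<in> OneN P" if "r = 0"
      proof -
        have "\<alpha> *\<^sub>R w0 \<in> OneN P" unfolding OneN_def using True by blast
        thus ?thesis using that by simp
      qed
      hence "canon (Suc N) (f_param (Suc N) a w) P \<beta> (r + \<alpha> *\<^sub>R w0)"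
        unfolding canon_def using finP Pu Pa rep cP c0 t by (auto simp: fS inner_add_right)
      thus ?thesis by blast
    next
      case nB: False
      have act: "\<bar>snd w0\<bar> < norm (fst w0)" using nA nB by auto
      have nfw: "norm (fst w0) \<le> norm w0" using norm_fst_le[of "fst w0" "snd w0"] by simp
      have nw: "norm w0 > 0" using act nfw by linarith
      define q where "q = w0 /\<^sub>R norm w0"
      define \<gamma> where "\<gamma> = \<alpha> * norm w0"
      have qn: "norm q = 1" unfolding q_def using nw by simp
      have qact: "\<bar>snd q\<bar> < norm (fst q)"
      proof -
        have "\<bar>snd w0\<bar> / norm w0 < norm (fst w0) / norm w0" using act nw by (rule divide_strict_right_mono)
        thus ?thesis unfolding q_def using nw by (simp add: abs_mult divide_inverse mult.commute)
      qed
      have zq: "(x, 1) \<bullet> w0 = norm w0 * ((x, 1) \<bullet> q)" for x :: "real^'d"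
        unfolding q_def using nw by simp
      have t: "\<alpha> * relu ((x, 1) \<bullet> w0) = \<gamma> * relu ((x, 1) \<bullet> q)" for x
        unfolding zq \<gamma>_def using nw by (simp add: relu_scale)
      show ?thesis
      proof (cases "q \<in> P")
        case True
        define \<beta>' where "\<beta>' p = \<beta> p + (if p = q then \<gamma> else 0)" for p
        have s: "(\<Sum>p\<in>P. \<beta>' p * relu ((x, 1) \<bullet> p)) = (\<Sum>p\<in>P. \<beta> p * relu ((x, 1) \<bullet> p)) + \<gamma> * relu ((x, 1) \<bullet> q)" for x
          unfolding \<beta>'_def using sum_bump[OF finP True] .
        have "canon (Suc N) (f_param (Suc N) a w) P \<beta>' r"
          unfolding canon_def using finP Pu Pa rep cP c0 by (auto simp: fS t s OneN_zero)
        thus ?thesis by blast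
      next
        case nq: False
        show ?thesis
        proof (cases "- q \<in> P")
          case True
          define \<beta>' where "\<beta>' p = \<beta> p + (if p = - q then \<gamma> else 0)" for p
          have s: "(\<Sum>p\<in>P. \<beta>' p * relu ((x, 1) \<bullet> p)) = (\<Sum>p\<in>P. \<beta> p * relu ((x, 1) \<bullet> p)) + \<gamma> * relu ((x, 1) \<bullet> (- q))" for x
            unfolding \<beta>'_def using sum_bump[OF finP True] .
          have t2: "\<gamma> * relu ((x, 1) \<bullet> q) = \<gamma> * relu ((x, 1) \<bullet> (- q)) + (x, 1) \<bullet> (\<gamma> *\<^sub>R q)" for x
            using relu_neg[of "(x, 1) \<bullet> q"] by (simp add: inner_minus_right distrib_left)
          have one: "r + \<gamma> *\<^sub>R q \<in> OneN P" if "r = 0"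
          proof -
            have "r + \<gamma> *\<^sub>R q = (- \<gamma>) *\<^sub>R (- q)" using that by simp
            thus ?thesis unfolding OneN_def using True by blast
          qed
          have "canon (Suc N) (f_param (Suc N) a w) P \<beta>' (r + \<gamma> *\<^sub>R q)"
            unfolding canon_def using finP Pu Pa rep cP c0 one
            by (auto simp: fS t t2 s inner_add_right)
          thus ?thesis by blast
        next
          case nmq: False
          define P' where "P' = insert q P"
          define \<beta>' where "\<beta>' p = (if p = q then \<gamma> else \<beta> p)" for p
          have s: "(\<Sum>p\<in>P'. \<beta>' p * relu ((x, 1) \<bullet> p)) = (\<Sum>p\<in>P. \<beta> p * relu ((x, 1) \<bullet> p)) + \<gamma> * relu ((x, 1) \<bullet> q)" for x
          proof -
            have "(\<Sum>p\<in>P'. \<beta>' p * relu ((x, 1) \<bullet> p)) = \<beta>' q * relu ((x, 1) \<bullet> q) + (\<Sum>p\<in>P. \<beta>' p * relu ((x, 1) \<bullet> p))"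
              unfolding P'_def using finP nq by simp
            also have "(\<Sum>p\<in>P. \<beta>' p * relu ((x, 1) \<bullet> p)) = (\<Sum>p\<in>P. \<beta> p * relu ((x, 1) \<bullet> p))"
            proof (rule sum.cong[OF refl])
              fix p assume "p \<in> P"
              hence "p \<noteq> q" using nq by blast
              thus "\<beta>' p * relu ((x, 1) \<bullet> p) = \<beta> p * relu ((x, 1) \<bullet> p)" by (simp add: \<beta>'_def)
            qed
            finally show ?thesis by (simp add: \<beta>'_def)
          qed
          have cardP': "card P' = Suc (card P)" unfolding P'_def using finP nq by simp
          have qq: "- q \<noteq> q"
          proof
            assume h: "- q = q"
            have "q + q = 0" using h by (metis add.left_inverse)
            hence "(2::real) *\<^sub>R q = 0" by (simp add: scaleR_2)
            hence "q = 0" by simp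
            thus False using qn by simp
          qed
          have Pa': "\<forall>p\<in>P'. - p \<notin> P'"
          proof
            fix p assume p: "p \<in> P'"
            show "- p \<notin> P'"
            proof (cases "p = q")
              case True thus ?thesis unfolding P'_def using nmq qq by simp
            next
              case False
              hence "p \<in> P" using p unfolding P'_def by simp
              moreover have "- p \<noteq> q" using \<open>p \<in> P\<close> nmq by (metis minus_minus)
              ultimately show ?thesis unfolding P'_def using Pa by simp
            qed
          qed
          have sub: "OneN P \<subseteq> OneN P'" unfolding OneN_def P'_def by blast
          have "canon (Suc N) (f_param (Suc N) a w) P' \<beta>' r"
            unfolding canon_def
          proof (intro conjI)
            show "finite P'" unfolding P'_def using finP by simp
            show "\<forall>p\<in>P'. norm p = 1 \<and> \<bar>snd p\<bar> < norm (fst p)" unfolding P'_def using Pu qn qact by auto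
            show "\<forall>p\<in>P'. - p \<notin> P'" by (rule Pa')
            show "\<forall>x\<in>cball 0 1. f_param (Suc N) a w x = (\<Sum>p\<in>P'. \<beta>' p * relu ((x, 1) \<bullet> p)) + (x, 1) \<bullet> r"
              using rep by (simp add: fS t s)
            show "card P' \<le> Suc N" using cardP' cP by simp
            show "card P' = Suc N \<longrightarrow> r = 0" using cardP' c0 by simp
            show "Suc N = Suc (card P') \<longrightarrow> r \<in> OneN P'" using cardP' c1 sub by auto
          qed
          thus ?thesis by blast
        qed
      qed
    qed
  qed
qed



definition fl :: "(real \<times> ((real^'d::finite) \<times> real)) list \<Rightarrow> real^'d \<Rightarrow> real" where
  "fl L x = sum_list (map (\<lambda>(a, w). a * relu ((x, 1) \<bullet> w)) L)"

definition cl :: "(real \<times> ((real^'d::finite) \<times> real)) list \<Rightarrow> real" where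
  "cl L = sum_list (map (\<lambda>(a, w). \<bar>a\<bar> * norm w) L)"

lemma fl_append: "fl (L1 @ L2) x = fl L1 x + fl L2 x" by (simp add: fl_def)
lemma cl_append: "cl (L1 @ L2) = cl L1 + cl L2" by (simp add: cl_def)

lemma list_to_param:
  fixes L :: "(real \<times> ((real^'d::finite) \<times> real)) list"
  assumes "length L \<le> N"
  shows "\<exists>a w. (\<forall>x. f_param N a w x = fl L x) \<and> kappa_param N a w = cl L"
proof -
  define a where "a i = (if i < length L then fst (L ! i) else 0)" for i
  define w where "w i = (if i < length L then snd (L ! i) else 0)" for i
  have "f_param N a w x = fl L x" for x
  proof -
    have "f_param N a w x = (\<Sum>i<length L. a i * relu ((x, 1) \<bullet> w i))"
      unfolding f_param_def using assms
      by (intro sum.mono_neutral_right) (auto simp: a_def)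
    also have "\<dots> = (\<Sum>i<length L. (\<lambda>(a, w). a * relu ((x, 1) \<bullet> w)) (L ! i))"
      by (rule sum.cong) (auto simp: a_def w_def split: prod.split)
    also have "\<dots> = fl L x"
      unfolding fl_def by (simp add: sum_list_sum_nth atLeast0LessThan)
    finally show ?thesis .
  qed
  moreover have "kappa_param N a w = cl L"
  proof -
    have "kappa_param N a w = (\<Sum>i<length L. \<bar>a i\<bar> * norm (w i))"
      unfolding kappa_param_def using assms
      by (intro sum.mono_neutral_right) (auto simp: a_def)
    also have "\<dots> = (\<Sum>i<length L. (\<lambda>(a, w). \<bar>a\<bar> * norm w) (L ! i))"
      by (rule sum.cong) (auto simp: a_def w_def split: prod.split)
    also have "\<dots> = cl L"
      unfolding cl_def by (simp add: sum_list_sum_nth atLeast0LessThan)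
    finally show ?thesis .
  qed
  ultimately show ?thesis by blast
qed

lemma fl_set:
  assumes "distinct ps"
  shows "fl (map (\<lambda>p. (\<beta> p, p)) ps) x = (\<Sum>p\<in>set ps. \<beta> p * relu ((x, 1) \<bullet> p))"
    and "cl (map (\<lambda>p. (\<beta> p, p)) ps) = (\<Sum>p\<in>set ps. \<bar>\<beta> p\<bar> * norm p)"
  using assms by (simp_all add: fl_def cl_def o_def sum_list_distinct_conv_sum_set)

lemma construct:
  fixes g :: "real^'d::finite \<Rightarrow> real"
  assumes "canon N g P \<beta> r"
  shows "\<exists>a w. (\<forall>x\<in>cball 0 1. f_param N a w x = g x) \<and> kappa_param N a w \<le> (\<Sum>p\<in>P. \<bar>\<beta> p\<bar>) + 2 * norm r"
proof -
  have finP: "finite P" and Pu: "\<forall>p\<in>P. norm p = 1 \<and> \<bar>snd p\<bar> < norm (fst p)"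
    and rep: "\<forall>x\<in>cball 0 1. g x = (\<Sum>p\<in>P. \<beta> p * relu ((x, 1) \<bullet> p)) + (x, 1) \<bullet> r"
    and cP: "card P \<le> N" and c0: "card P = N \<longrightarrow> r = 0" and c1: "N = Suc (card P) \<longrightarrow> r \<in> OneN P"
    using assms unfolding canon_def by auto
  obtain ps where ps: "set ps = P" "distinct ps" using finite_distinct_list[OF finP] by blast
  have lenps: "length ps = card P" using ps distinct_card by fastforce
  have normsum: "(\<Sum>p\<in>P. \<bar>\<gamma> p\<bar> * norm p) = (\<Sum>p\<in>P. \<bar>\<gamma> p\<bar>)" for \<gamma> :: "_ \<Rightarrow> real"
    by (rule sum.cong) (auto simp: Pu)
  define Lp where "Lp = map (\<lambda>p. (\<beta> p, p)) ps"
  have flp: "fl Lp x = (\<Sum>p\<in>P. \<beta> p * relu ((x, 1) \<bullet> p))" for x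
    unfolding Lp_def using fl_set(1)[OF ps(2)] ps(1) by simp
  have clp: "cl Lp = (\<Sum>p\<in>P. \<bar>\<beta> p\<bar>)"
    unfolding Lp_def using fl_set(2)[OF ps(2)] ps(1) normsum by simp
  have lenLp: "length Lp = card P" unfolding Lp_def using lenps by simp
  have "\<exists>L. length L \<le> N \<and> (\<forall>x\<in>cball 0 1. fl L x = g x) \<and> cl L \<le> (\<Sum>p\<in>P. \<bar>\<beta> p\<bar>) + 2 * norm r"
  proof (cases "N = card P")
    case True
    hence "r = 0" using c0 by simp
    thus ?thesis using True rep flp clp lenLp by (intro exI[of _ Lp]) auto
  next
    case nt: False
    show ?thesis
    proof (cases "N = Suc (card P)")
      case False
      hence N2: "card P + 2 \<le> N" using nt cP by linarith
      define L where "L = Lp @ [(1, r), (-1, - r)]"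
      have "fl L x = fl Lp x + (x, 1) \<bullet> r" for x
      proof -
        have "fl [(1, r), (-1, - r)] x = relu ((x, 1) \<bullet> r) - relu (- ((x, 1) \<bullet> r))"
          by (simp add: fl_def inner_minus_right)
        also have "\<dots> = (x, 1) \<bullet> r" using relu_neg[of "(x, 1) \<bullet> r"] by simp
        finally show ?thesis unfolding L_def fl_append by simp
      qed
      moreover have "cl L = cl Lp + 2 * norm r" unfolding L_def cl_append by (simp add: cl_def)
      moreover have "length L \<le> N" unfolding L_def using lenLp N2 by simp
      ultimately show ?thesis using rep flp clp by (intro exI[of _ L]) auto
    next
      case True
      hence "r \<in> OneN P" using c1 by simp
      then obtain l u where lu: "r = l *\<^sub>R u" "snd u \<ge> norm (fst u) \<or> u \<in> P"
        unfolding OneN_def by blast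
      show ?thesis
      proof (cases "u \<in> P")
        case False
        hence pu: "snd u \<ge> norm (fst u)" using lu by simp
        define L where "L = Lp @ [(l, u)]"
        have "fl L x = fl Lp x + (x, 1) \<bullet> r" if "x \<in> cball 0 1" for x
          using pos_on_ball[OF that pu] unfolding L_def fl_append lu(1)
          by (simp add: fl_def relu_def)
        moreover have "cl L = cl Lp + norm r" unfolding L_def cl_append lu(1) by (simp add: cl_def)
        moreover have "length L \<le> N" unfolding L_def using lenLp True by simp
        ultimately show ?thesis using rep flp clp
          by (intro exI[of _ L]) (auto simp: algebra_simps)
      next
        case uP: True
        have nu: "norm u = 1" using Pu uP by simp
        define \<beta>' where "\<beta>' p = \<beta> p + (if p = u then l else 0)" for p
        define L where "L = map (\<lambda>p. (\<beta>' p, p)) ps @ [(- l, - u)]"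
        have "fl L x = (\<Sum>p\<in>P. \<beta> p * relu ((x, 1) \<bullet> p)) + (x, 1) \<bullet> r" for x
        proof -
          have "fl L x = (\<Sum>p\<in>P. \<beta>' p * relu ((x, 1) \<bullet> p)) - l * relu (- ((x, 1) \<bullet> u))"
            unfolding L_def fl_append fl_set(1)[OF ps(2)] ps(1) by (simp add: fl_def inner_minus_right)
          also have "(\<Sum>p\<in>P. \<beta>' p * relu ((x, 1) \<bullet> p)) = (\<Sum>p\<in>P. \<beta> p * relu ((x, 1) \<bullet> p)) + l * relu ((x, 1) \<bullet> u)"
            unfolding \<beta>'_def by (rule sum_bump[OF finP uP])
          finally show ?thesis using relu_neg[of "(x, 1) \<bullet> u"] unfolding lu(1)
            by (simp add: algebra_simps)
        qed
        moreover have "cl L \<le> (\<Sum>p\<in>P. \<bar>\<beta> p\<bar>) + 2 * norm r"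
        proof -
          have "cl L = (\<Sum>p\<in>P. \<bar>\<beta>' p\<bar>) + \<bar>l\<bar>"
            unfolding L_def cl_append fl_set(2)[OF ps(2)] ps(1) normsum using nu by (simp add: cl_def)
          also have "(\<Sum>p\<in>P. \<bar>\<beta>' p\<bar>) \<le> (\<Sum>p\<in>P. \<bar>\<beta> p\<bar> + (if p = u then \<bar>l\<bar> else 0))"
            unfolding \<beta>'_def by (rule sum_mono) (auto simp: abs_triangle_ineq)
          also have "\<dots> = (\<Sum>p\<in>P. \<bar>\<beta> p\<bar>) + \<bar>l\<bar>"
            using finP uP by (simp add: sum.distrib sum.delta')
          finally show ?thesis unfolding lu(1) using nu by simp
        qed
        moreover have "length L \<le> N" unfolding L_def using lenps True by simp
        ultimately show ?thesis using rep by (intro exI[of _ L]) auto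
      qed
    qed
  qed
  then obtain L where L: "length L \<le> N" "\<forall>x\<in>cball 0 1. fl L x = g x" "cl L \<le> (\<Sum>p\<in>P. \<bar>\<beta> p\<bar>) + 2 * norm r"
    by blast
  from list_to_param[OF L(1)] obtain a w where "\<forall>x. f_param N a w x = fl L x" "kappa_param N a w = cl L"
    by blast
  thus ?thesis using L by (intro exI[of _ a] exI[of _ w]) auto
qed



lemma lower_meas:
  fixes a :: "nat \<Rightarrow> real" and w :: "nat \<Rightarrow> (real^'d::finite) \<times> real"
  shows "\<exists>S c. finite S \<and> S \<subseteq> sphere 0 1 \<and> (\<forall>x. f_meas S c x = f_param N a w x)
           \<and> (\<Sum>v\<in>S. \<bar>c v\<bar>) \<le> kappa_param N a w"
proof -
  define I where "I = {i\<in>{..<N}. w i \<noteq> 0}"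
  define g where "g i = w i /\<^sub>R norm (w i)" for i
  define S where "S = g ` I"
  define c where "c u = (\<Sum>i\<in>{i\<in>I. g i = u}. a i * norm (w i))" for u
  have finI: "finite I" unfolding I_def by simp
  have finS: "finite S" unfolding S_def using finI by simp
  have Ssph: "S \<subseteq> sphere 0 1" unfolding S_def g_def I_def by auto
  have "f_meas S c x = f_param N a w x" for x
  proof -
    have "f_meas S c x = (\<Sum>u\<in>S. \<Sum>i\<in>{i\<in>I. g i = u}. a i * norm (w i) * relu ((x, 1) \<bullet> u))"
      unfolding f_meas_def c_def by (simp add: sum_distrib_right)
    also have "\<dots> = (\<Sum>u\<in>S. \<Sum>i\<in>{i\<in>I. g i = u}. a i * norm (w i) * relu ((x, 1) \<bullet> g i))"
      by (intro sum.cong refl) auto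
    also have "\<dots> = (\<Sum>i\<in>I. a i * norm (w i) * relu ((x, 1) \<bullet> g i))"
      by (rule sum.group[OF finI finS]) (simp add: S_def)
    also have "\<dots> = (\<Sum>i\<in>I. a i * relu ((x, 1) \<bullet> w i))"
    proof (rule sum.cong[OF refl])
      fix i assume "i \<in> I"
      hence nz: "norm (w i) > 0" unfolding I_def by simp
      have "(x, 1) \<bullet> w i = norm (w i) * ((x, 1) \<bullet> g i)" unfolding g_def using nz by simp
      thus "a i * norm (w i) * relu ((x, 1) \<bullet> g i) = a i * relu ((x, 1) \<bullet> w i)"
        using nz by (simp add: relu_scale)
    qed
    also have "\<dots> = f_param N a w x"
      unfolding f_param_def I_def by (intro sum.mono_neutral_left) (auto simp: relu_def)
    finally show ?thesis .
  qed
  moreover have "(\<Sum>v\<in>S. \<bar>c v\<bar>) \<le> kappa_param N a w"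
  proof -
    have "(\<Sum>v\<in>S. \<bar>c v\<bar>) \<le> (\<Sum>u\<in>S. \<Sum>i\<in>{i\<in>I. g i = u}. \<bar>a i\<bar> * norm (w i))"
      unfolding c_def by (intro sum_mono order_trans[OF sum_abs]) (simp add: abs_mult)
    also have "\<dots> = (\<Sum>i\<in>I. \<bar>a i\<bar> * norm (w i))"
      by (rule sum.group[OF finI finS]) (simp add: S_def)
    also have "\<dots> \<le> kappa_param N a w"
      unfolding kappa_param_def I_def by (intro sum_mono2) auto
    finally show ?thesis .
  qed
  ultimately show ?thesis using finS Ssph by blast
qed

theorem theorem1:
  fixes f :: "real^'d \<Rightarrow> real" and N :: nat
  assumes "f \<in> NN N"
  shows "kappa_fun f \<le> kappa_inf_param N f \<and> kappa_inf_param N f \<le> 3 * kappa_fun f"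
proof -
  define PS where "PS = {kappa_param N a w | a w. \<forall>x\<in>unit_ball. f x = f_param N a w x}"
  define MS where "MS = {(\<Sum>v\<in>S. \<bar>c v\<bar>) | S c. finite S \<and> S \<subseteq> unit_sphere \<and>
                        (\<forall>x\<in>unit_ball. f x = f_meas S c x)}"
  have kf: "kappa_fun f = Inf MS" unfolding kappa_fun_def MS_def ..
  have kp: "kappa_inf_param N f = Inf PS" unfolding kappa_inf_param_def PS_def ..
  obtain a w where aw: "\<forall>x\<in>unit_ball. f x = f_param N a w x"
    using assms unfolding NN_def by blast
  have PSne: "PS \<noteq> {}" unfolding PS_def using aw by blast
  have bddP: "bdd_below PS"
  proof (rule bdd_belowI[of _ 0])
    fix y assume "y \<in> PS"
    then obtain a1 w1 where "y = kappa_param N a1 (w1 :: nat \<Rightarrow> (real^'d) \<times> real)" unfolding PS_def by blast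
    thus "0 \<le> y" unfolding kappa_param_def by (simp add: sum_nonneg)
  qed
  have bddM: "bdd_below MS"
  proof (rule bdd_belowI[of _ 0])
    fix y assume "y \<in> MS"
    then obtain S1 :: "((real^'d) \<times> real) set" and c1 where "y = (\<Sum>v\<in>S1. \<bar>c1 v\<bar>)" unfolding MS_def by blast
    thus "0 \<le> y" by (simp add: sum_nonneg)
  qed
  have low: "Inf MS \<le> y" if "y \<in> PS" for y
  proof -
    from that have "\<exists>a' w'. y = kappa_param N a' w' \<and> (\<forall>x\<in>unit_ball. f x = f_param N a' w' x)"
      unfolding PS_def mem_Collect_eq .
    then obtain a' w' where y: "y = kappa_param N a' w'" "\<forall>x\<in>unit_ball. f x = f_param N a' w' x"
      by blast
    obtain S c where Sc: "finite S" "S \<subseteq> sphere 0 1" "\<forall>x. f_meas S c x = f_param N a' w' x"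
      "(\<Sum>v\<in>S. \<bar>c v\<bar>) \<le> kappa_param N a' w'"
      using lower_meas[of N a' w'] by blast
    have "\<forall>x\<in>unit_ball. f x = f_meas S c x" using Sc(3) y(2) by simp
    hence "(\<Sum>v\<in>S. \<bar>c v\<bar>) \<in> MS" unfolding MS_def unit_sphere_def using Sc(1,2) by blast
    hence "Inf MS \<le> (\<Sum>v\<in>S. \<bar>c v\<bar>)" using bddM by (rule cInf_lower)
    thus ?thesis using Sc(4) y(1) by simp
  qed
  have MSne: "MS \<noteq> {}"
  proof -
    obtain S c where Sc: "finite S" "S \<subseteq> sphere 0 1" "\<forall>x. f_meas S c x = f_param N a w x"
      using lower_meas[of N a w] by blast
    have "\<forall>x\<in>unit_ball. f x = f_meas S c x" using Sc(3) aw by simp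
    hence "(\<Sum>v\<in>S. \<bar>c v\<bar>) \<in> MS" unfolding MS_def unit_sphere_def using Sc(1,2) by blast
    thus ?thesis by blast
  qed
  have up: "Inf PS / 3 \<le> T" if "T \<in> MS" for T
  proof -
    from that have "\<exists>S c. T = (\<Sum>v\<in>S. \<bar>c v\<bar>) \<and> finite S \<and> S \<subseteq> unit_sphere \<and> (\<forall>x\<in>unit_ball. f x = f_meas S c x)"
      unfolding MS_def mem_Collect_eq .
    then obtain S c where Sc: "T = (\<Sum>v\<in>S. \<bar>c v\<bar>)" "finite S" "S \<subseteq> sphere 0 1"
      "\<forall>x\<in>cball 0 1. f x = f_meas S c x"
      unfolding unit_sphere_def unit_ball_def by blast
    obtain P \<beta> r where can: "canon N (f_param N a w) P \<beta> r" using inv_exists by blast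
    have Pf: "finite P" "\<forall>p\<in>P. norm p = 1 \<and> \<bar>snd p\<bar> < norm (fst p)" "\<forall>p\<in>P. - p \<notin> P"
      "\<forall>x\<in>cball 0 1. f_param N a w x = (\<Sum>p\<in>P. \<beta> p * relu ((x, 1) \<bullet> p)) + (x, 1) \<bullet> r"
      using can unfolding canon_def by auto
    obtain a' w' where a'w': "\<forall>x\<in>cball 0 1. f_param N a' w' x = f_param N a w x"
      "kappa_param N a' w' \<le> (\<Sum>p\<in>P. \<bar>\<beta> p\<bar>) + 2 * norm r"
      using construct[OF can] by blast
    have eq: "\<forall>x\<in>cball 0 1. (\<Sum>v\<in>S. c v * relu ((x, 1) \<bullet> v)) = (\<Sum>p\<in>P. \<beta> p * relu ((x, 1) \<bullet> p)) + (x, 1) \<bullet> r"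
      using Sc(4) aw Pf(4) unfolding f_meas_def unit_ball_def by auto
    have kb: "(\<Sum>p\<in>P. \<bar>\<beta> p\<bar>) + 2 * norm r \<le> 3 * T"
      unfolding Sc(1) by (rule key_bound[OF Sc(2) Sc(3) Pf(1) Pf(2) Pf(3) eq])
    have "\<forall>x\<in>unit_ball. f x = f_param N a' w' x" using a'w'(1) aw unfolding unit_ball_def by simp
    hence "kappa_param N a' w' \<in> PS" unfolding PS_def by blast
    hence "Inf PS \<le> kappa_param N a' w'" using bddP by (rule cInf_lower)
    thus ?thesis using a'w'(2) kb by linarith
  qed
  have "Inf MS \<le> Inf PS" using PSne low by (rule cInf_greatest)
  moreover have "Inf PS / 3 \<le> Inf MS" using MSne up by (rule cInf_greatest)
  ultimately show ?thesis unfolding kf kp by linarith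
qed


end
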